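(* Let $\beta:\mathbb{Z}\to\mathbb{C}$ have convergent increments and let $D_\beta:\mathcal{D}\to\mathcal{H}$ be $$D_\beta f=U\beta(\mathbb{K})f-f\beta(-\mathbb{K})U=\sum_{n\in\mathbb{Z}}U^{n+1}\big(\beta(\mathbb{K}+n)f_n(\mathbb{K})-\beta(-\mathbb{K}-1)f_n(\mathbb{K}+1)\big).$$ Let $m^2$ be a positive number. Then for all $f\in\mathcal{H}^+$, $$\langle \Theta f,\big(D_\beta^*D_\beta+m^2\big)^{-1}f\rangle\ge0.$$
   Context: Let $\{E_k\}_{k\in\mathbb{Z}}$ be the canonical basis of $\ell^2(\mathbb{Z})$, $UE_k=E_{k+1}$, $\mathbb{K}E_k=kE_k$, and $a(\mathbb{K})E_k=a(k)E_k$ for $a:\mathbb{Z}\to\mathbb{C}$ (so $a(\mathbb{K})U=Ua(\mathbb{K}+1)$). A function $\beta$ has convergent increments if $k\mapsto\beta(k)-\beta(k-1)$ has finite limits as $k\to\pm\infty$. $\mathcal{H}$ is the Hilbert space of Hilbert–Schmidt operators on $\ell^2(\mathbb{Z})$ with $\langle f,g\rangle=\mathrm{tr}(f^*g)$; each $f\in\mathcal{H}$ is uniquely $f=\sum_nU^nf_n(\mathbb{K})$ with $\sum_{n,k}|f_n(k)|^2<\infty$. $\mathcal{D}\subset\mathcal{H}$ is the dense subspace of finite sums $\sum_nU^nf_n(\mathbb{K})$ with each $f_n$ finitely supported. $\Theta f=\sum_nU^nf_n(-\mathbb{K}-n)$, and $\mathcal{H}^+=\{f\in\mathcal{H}:f_n(k)=0\text{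 whenever }n+2k<0\}$. $D_\beta^*D_\beta$ denotes the nonnegative self-adjoint operator $\overline{D_\beta}^{\,*}\,\overline{D_\beta}$, where $\overline{D_\beta}$ is the closure of the densely defined operator $D_\beta$. *)

theory Defs
  imports "HOL-Analysis.Analysis"
begin

text \<open>An element f of the Hilbert-Schmidt space is represented by its coefficient
  function (n,k) \<mapsto> f_n(k), where f = \<Sum>_n U^n f_n(K).  The trace inner product
  tr(f^* g) becomes \<Sum>_{n,k} conj(f_n k) g_n k.\<close>

type_synonym hs = "int \<times> int \<Rightarrow> complex"

definition HS :: "hs \<Rightarrow> bool" where
  "HS f \<longleftrightarrow> (\<lambda>p. (cmod (f p))\<^sup>2) summable_on UNIV"

definition hs_inner :: "hs \<Rightarrow> hs \<Rightarrow> complex" where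
  "hs_inner f g = (\<Sum>\<^sub>\<infinity>p. cnj (f p) * g p)"

definition hs_norm :: "hs \<Rightarrow> real" where
  "hs_norm f = sqrt (\<Sum>\<^sub>\<infinity>p. (cmod (f p))\<^sup>2)"

definition in_D :: "hs \<Rightarrow> bool" where
  "in_D f \<longleftrightarrow> finite {p. f p \<noteq> 0}"

definition convergent_increments :: "(int \<Rightarrow> complex) \<Rightarrow> bool" where
  "convergent_increments \<beta> \<longleftrightarrow>
     (\<exists>L. ((\<lambda>k. \<beta> k - \<beta> (k - 1)) \<longlongrightarrow> L) at_top) \<and>
     (\<exists>L. ((\<lambda>k. \<beta> k - \<beta> (k - 1)) \<longlongrightarrow> L) at_bot)"

text \<open>D_beta f = \<Sum>_n U^{n+1}(\<beta>(K+n) f_n(K) - \<beta>(-K-1) f_n(K+1)), in coefficients.\<close>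
definition Dop :: "(int \<Rightarrow> complex) \<Rightarrow> hs \<Rightarrow> hs" where
  "Dop \<beta> f = (\<lambda>(n, k). \<beta> (k + n - 1) * f (n - 1, k) - \<beta> (- k - 1) * f (n - 1, k + 1))"

text \<open>Theta f = \<Sum>_n U^n f_n(-K-n).\<close>
definition Theta :: "hs \<Rightarrow> hs" where
  "Theta f = (\<lambda>(n, k). f (n, - k - n))"

definition in_Hplus :: "hs \<Rightarrow> bool" where
  "in_Hplus f \<longleftrightarrow> HS f \<and> (\<forall>n k. n + 2 * k < 0 \<longrightarrow> f (n, k) = 0)"

definition closD :: "(int \<Rightarrow> complex) \<Rightarrow> hs \<Rightarrow> hs \<Rightarrow> bool" where
  "closD \<beta> g h \<longleftrightarrow> HS g \<and> HS h \<and>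
     (\<exists>\<phi> :: nat \<Rightarrow> hs. (\<forall>j. in_D (\<phi> j)) \<and>
        (\<lambda>j. hs_norm (\<phi> j - g)) \<longlonglongrightarrow> 0 \<and>
        (\<lambda>j. hs_norm (Dop \<beta> (\<phi> j) - h)) \<longlonglongrightarrow> 0)"

definition adjD :: "(int \<Rightarrow> complex) \<Rightarrow> hs \<Rightarrow> hs \<Rightarrow> bool" where
  "adjD \<beta> u v \<longleftrightarrow> HS u \<and> HS v \<and>
     (\<forall>g h. closD \<beta> g h \<longrightarrow> hs_inner h u = hs_inner g v)"

definition DstarD :: "(int \<Rightarrow> complex) \<Rightarrow> hs \<Rightarrow> hs \<Rightarrow> bool" where
  "DstarD \<beta> g w \<longleftrightarrow> (\<exists>h. closD \<beta> g h \<and> adjD \<beta> h w)"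

definition is_resolvent :: "(int \<Rightarrow> complex) \<Rightarrow> real \<Rightarrow> hs \<Rightarrow> hs \<Rightarrow> bool" where
  "is_resolvent \<beta> m2 f g \<longleftrightarrow>
     (\<exists>w. DstarD \<beta> g w \<and> (\<forall>p. w p + complex_of_real m2 * g p = f p))"

end

theory Submission imports Defs begin


lemma HS_0[simp]: "HS (\<lambda>_. 0)"
  by (simp add: HS_def)

lemma sq_add_le: "(cmod (a + b))\<^sup>2 \<le> 2 * (cmod a)\<^sup>2 + 2 * (cmod b)\<^sup>2"
proof -
  have "cmod (a+b) \<le> cmod a + cmod b" by (rule norm_triangle_ineq)
  hence "(cmod (a + b))\<^sup>2 \<le> (cmod a + cmod b)\<^sup>2" by (simp add: power_mono)
  also have "\<dots> \<le> 2 * (cmod a)\<^sup>2 + 2 * (cmod b)\<^sup>2"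
    using sum_squares_bound[of "cmod a" "cmod b"] by (simp add: power2_sum)
  finally show ?thesis .
qed

lemma HS_add: "HS f \<Longrightarrow> HS g \<Longrightarrow> HS (\<lambda>p. f p + g p)"
  unfolding HS_def
  apply (rule summable_on_comparison_test[where f="\<lambda>p. 2 * (cmod (f p))\<^sup>2 + 2 * (cmod (g p))\<^sup>2"])
  by (auto intro!: summable_on_add summable_on_cmult_right simp: sq_add_le)

lemma HS_scale: "HS f \<Longrightarrow> HS (\<lambda>p. c * f p)"
  unfolding HS_def
  by (auto simp: norm_mult power_mult_distrib intro!: summable_on_cmult_right)

lemma HS_bmult: "HS f \<Longrightarrow> (\<And>p. cmod (s p) \<le> 1) \<Longrightarrow> HS (\<lambda>p. s p * f p)"
  unfolding HS_def
  apply (rule summable_on_comparison_test[where f="\<lambda>p. (cmod (f p))\<^sup>2"])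
  apply (auto simp: norm_mult power_mult_distrib)
  by (metis mult_left_le_one_le norm_ge_zero power_le_one zero_le_power2)

lemma HS_uminus: "HS f \<Longrightarrow> HS (\<lambda>p. - f p)"
  using HS_scale[of f "-1"] by simp

lemma HS_diff: "HS f \<Longrightarrow> HS g \<Longrightarrow> HS (\<lambda>p. f p - g p)"
  using HS_add[of f "\<lambda>p. - g p"] HS_uminus[of g] by simp

lemma HS_finite: "finite {p. f p \<noteq> 0} \<Longrightarrow> HS f"
  unfolding HS_def
  by (rule finite_nonzero_values_imp_summable_on) (auto elim: finite_subset[rotated])

lemma in_D_HS: "in_D f \<Longrightarrow> HS f"
  by (simp add: in_D_def HS_finite)

lemma Theta_Theta[simp]: "Theta (Theta f) = f"
  by (auto simp: Theta_def fun_eq_iff)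

lemma bij_th: "bij (\<lambda>(n::int, k::int). (n, - k - n))"
  by (rule o_bij[where g="\<lambda>(n::int, k::int). (n, - k - n)"]) (auto simp: fun_eq_iff)

lemma Theta_app: "Theta f p = f ((\<lambda>(n::int, k::int). (n, - k - n)) p)"
  by (cases p) (simp add: Theta_def)

lemma infsum_Theta: "(\<Sum>\<^sub>\<infinity>p. F (Theta f p)) = (\<Sum>\<^sub>\<infinity>p. F (f p))"
  unfolding Theta_app
  by (rule infsum_reindex_bij_betw[OF bij_th, where f="\<lambda>p. F (f p)"])

lemma summable_Theta: "(\<lambda>p. F (Theta f p)) summable_on UNIV \<longleftrightarrow> (\<lambda>p. F (f p)) summable_on UNIV"
  unfolding Theta_app
  by (rule summable_on_reindex_bij_betw[OF bij_th, where f="\<lambda>p. F (f p)"])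

lemma HS_Theta: "HS f \<Longrightarrow> HS (Theta f)"
  unfolding HS_def using summable_Theta[of "\<lambda>z. (cmod z)\<^sup>2" f] by simp

lemma prod_le: "cmod (cnj a * b) \<le> (cmod a)\<^sup>2 + (cmod b)\<^sup>2"
proof -
  have "cmod (cnj a * b) = cmod a * cmod b" by (simp add: norm_mult)
  also have "\<dots> \<le> (cmod a)\<^sup>2 + (cmod b)\<^sup>2"
    using sum_squares_bound[of "cmod a" "cmod b"] zero_le_power2[of "cmod a"] zero_le_power2[of "cmod b"]
      mult_nonneg_nonneg[of "cmod a" "cmod b"] by linarith
  finally show ?thesis .
qed

lemma inner_summable: "HS f \<Longrightarrow> HS g \<Longrightarrow> (\<lambda>p. cnj (f p) * g p) summable_on UNIV"
  unfolding HS_def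
  apply (rule abs_summable_summable)
  apply (rule summable_on_comparison_test[where f="\<lambda>p. (cmod (f p))\<^sup>2 + (cmod (g p))\<^sup>2"])
  by (auto intro!: summable_on_add prod_le)

lemma hs_inner_add_right: "HS f \<Longrightarrow> HS g \<Longrightarrow> HS h \<Longrightarrow>
   hs_inner f (\<lambda>p. g p + h p) = hs_inner f g + hs_inner f h"
  unfolding hs_inner_def
  by (simp add: distrib_left infsum_add inner_summable)

lemma hs_inner_add_left: "HS f \<Longrightarrow> HS g \<Longrightarrow> HS h \<Longrightarrow>
   hs_inner (\<lambda>p. f p + g p) h = hs_inner f h + hs_inner g h"
  unfolding hs_inner_def
  by (simp add: distrib_right infsum_add inner_summable)

lemma hs_inner_scale_right: "hs_inner f (\<lambda>p. c * g p) = c * hs_inner f g"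
  unfolding hs_inner_def
  by (subst infsum_cmult_right'[symmetric]) (simp add: algebra_simps)

lemma hs_inner_scale_left: "hs_inner (\<lambda>p. c * f p) g = cnj c * hs_inner f g"
  unfolding hs_inner_def
  by (subst infsum_cmult_right'[symmetric]) (simp add: algebra_simps)

lemma hs_inner_cnj: "hs_inner g f = cnj (hs_inner f g)"
  unfolding hs_inner_def infsum_cnj[symmetric]
  by (simp add: mult.commute)

lemma hs_inner_Theta: "hs_inner (Theta f) g = hs_inner f (Theta g)"
proof -
  have "hs_inner f (Theta g) = (\<Sum>\<^sub>\<infinity>p. cnj (Theta (Theta f) p) * Theta g p)" 
    by (simp add: hs_inner_def)
  also have "\<dots> = (\<Sum>\<^sub>\<infinity>p. (\<lambda>p. cnj (Theta f p) * g p) ((\<lambda>(n::int, k::int). (n, - k - n)) p))"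
    by (simp add: Theta_app case_prod_beta)
  also have "\<dots> = hs_inner (Theta f) g"
    unfolding hs_inner_def
    by (rule infsum_reindex_bij_betw[OF bij_th, where f="\<lambda>p. cnj (Theta f p) * g p"])
  finally show ?thesis ..
qed

lemma hs_inner_self: "hs_inner f f = complex_of_real (\<Sum>\<^sub>\<infinity>p. (cmod (f p))\<^sup>2)"
proof -
  have "hs_inner f f = (\<Sum>\<^sub>\<infinity>p. complex_of_real ((cmod (f p))\<^sup>2))"
    unfolding hs_inner_def
  proof (rule infsum_cong)
    fix p show "cnj (f p) * f p = complex_of_real ((cmod (f p))\<^sup>2)"
      using complex_norm_square[of "f p"] by (simp add: mult.commute)
  qed
  also have "\<dots> = complex_of_real (\<Sum>\<^sub>\<infinity>p. (cmod (f p))\<^sup>2)"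
    apply (rule infsum_bounded_linear_strong)
     apply (rule summable_on_bounded_linear_iff[where h'=Re])
    by (auto intro: bounded_linear_of_real bounded_linear_Re)
  finally show ?thesis .
qed

lemma hs_norm_sq: "(hs_norm f)\<^sup>2 = (\<Sum>\<^sub>\<infinity>p. (cmod (f p))\<^sup>2)"
  unfolding hs_norm_def by (simp add: infsum_nonneg)

lemma hs_norm_zero: "HS f \<Longrightarrow> hs_norm f = 0 \<Longrightarrow> f p = 0"
  using nonneg_infsum_le_0D[of "\<lambda>p. (cmod (f p))\<^sup>2" UNIV p]
  unfolding hs_norm_def HS_def by (simp add: infsum_nonneg)

lemma pt_le: "HS f \<Longrightarrow> (cmod (f p))\<^sup>2 \<le> (hs_norm f)\<^sup>2"
  unfolding hs_norm_sq HS_def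
  using finite_sum_le_infsum[of "\<lambda>p. (cmod (f p))\<^sup>2" UNIV "{p}"] by simp

lemma fin_le: "HS f \<Longrightarrow> finite F \<Longrightarrow> (\<Sum>p\<in>F. (cmod (f p))\<^sup>2) \<le> (hs_norm f)\<^sup>2"
  unfolding hs_norm_sq HS_def
  using finite_sum_le_infsum[of "\<lambda>p. (cmod (f p))\<^sup>2" UNIV F] by simp



typedef ell2 = "{f::hs. HS f}" morphisms vec mk
  by (rule exI[of _ "\<lambda>_. 0"]) simp

lemma HS_vec[simp]: "HS (vec a)"
  using vec by simp

lemma vec_mk[simp]: "HS f \<Longrightarrow> vec (mk f) = f"
  by (simp add: mk_inverse)

lemma ell2_eqI: "(\<And>p. vec a p = vec b p) \<Longrightarrow> a = b"
  by (metis vec_inject ext)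

instantiation ell2 :: real_vector
begin
definition zero_ell2 :: ell2 where "zero_ell2 = mk (\<lambda>_. 0)"
definition plus_ell2 :: "ell2 \<Rightarrow> ell2 \<Rightarrow> ell2" where "plus_ell2 a b = mk (\<lambda>p. vec a p + vec b p)"
definition minus_ell2 :: "ell2 \<Rightarrow> ell2 \<Rightarrow> ell2" where "minus_ell2 a b = mk (\<lambda>p. vec a p - vec b p)"
definition uminus_ell2 :: "ell2 \<Rightarrow> ell2" where "uminus_ell2 a = mk (\<lambda>p. - vec a p)"
definition scaleR_ell2 :: "real \<Rightarrow> ell2 \<Rightarrow> ell2" where "scaleR_ell2 r a = mk (\<lambda>p. complex_of_real r * vec a p)"

lemma vec_zero[simp]: "vec 0 = (\<lambda>_. 0)"
  by (simp add: zero_ell2_def)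
lemma vec_add[simp]: "vec (a + b) = (\<lambda>p. vec a p + vec b p)"
  by (simp add: plus_ell2_def HS_add)
lemma vec_diff[simp]: "vec (a - b) = (\<lambda>p. vec a p - vec b p)"
  by (simp add: minus_ell2_def HS_diff)
lemma vec_uminus[simp]: "vec (- a) = (\<lambda>p. - vec a p)"
  by (simp add: uminus_ell2_def HS_uminus)
lemma vec_scaleR[simp]: "vec (scaleR r a) = (\<lambda>p. complex_of_real r * vec a p)"
  by (simp add: scaleR_ell2_def HS_scale)

instance
  by standard (auto intro!: ell2_eqI simp: algebra_simps)
end

instantiation ell2 :: real_inner
begin
definition inner_ell2 :: "ell2 \<Rightarrow> ell2 \<Rightarrow> real" where "inner_ell2 a b = Re (hs_inner (vec a) (vec b))"
definition norm_ell2 :: "ell2 \<Rightarrow> real" where "norm_ell2 a = hs_norm (vec a)"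
definition dist_ell2 :: "ell2 \<Rightarrow> ell2 \<Rightarrow> real" where "dist_ell2 a b = norm (a - b)"
definition sgn_ell2 :: "ell2 \<Rightarrow> ell2" where "sgn_ell2 a = a /\<^sub>R norm a"
definition uniformity_ell2 :: "(ell2 \<times> ell2) filter"
  where "uniformity_ell2 = (INF e\<in>{0 <..}. principal {(x, y). dist x y < e})"
definition open_ell2 :: "ell2 set \<Rightarrow> bool"
  where "open_ell2 S = (\<forall>x\<in>S. \<forall>\<^sub>F (x', y) in uniformity. x' = x \<longrightarrow> y \<in> S)"

instance
proof
  fix r :: real and x y z :: ell2
  show "dist x y = norm (x - y)" by (simp add: dist_ell2_def)
  show "sgn x = x /\<^sub>R norm x" by (simp add: sgn_ell2_def)
  show "(uniformity :: (ell2 \<times> ell2) filter) = (INF e\<in>{0 <..}. principal {(x, y). dist x y < e})"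
    by (simp add: uniformity_ell2_def)
  show "open U = (\<forall>x\<in>U. \<forall>\<^sub>F (x', y) in uniformity. x' = x \<longrightarrow> y \<in> U)" for U :: "ell2 set"
    by (simp add: open_ell2_def)
  show "inner x y = inner y x"
    unfolding inner_ell2_def by (subst hs_inner_cnj) simp
  show "inner (x + y) z = inner x z + inner y z"
    unfolding inner_ell2_def by (simp add: hs_inner_add_left)
  show "inner (r *\<^sub>R x) y = r * inner x y"
    unfolding inner_ell2_def by (simp add: hs_inner_scale_left)
  show "0 \<le> inner x x"
    unfolding inner_ell2_def hs_inner_self by (simp add: infsum_nonneg)
  show "(inner x x = 0) = (x = 0)"
  proof
    assume "inner x x = 0"
    hence "hs_norm (vec x) = 0" unfolding inner_ell2_def hs_inner_self hs_norm_def by simp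
    thus "x = 0" by (intro ell2_eqI) (simp add: hs_norm_zero)
  qed (simp add: inner_ell2_def hs_inner_def)
  show "norm x = sqrt (inner x x)"
    unfolding inner_ell2_def hs_inner_self norm_ell2_def hs_norm_def by simp
qed
end

lemma norm_vec_le: "cmod (vec a p) \<le> norm a"
proof -
  have "(cmod (vec a p))\<^sup>2 \<le> (norm a)\<^sup>2" unfolding norm_ell2_def by (rule pt_le) simp
  thus ?thesis by (simp add: power2_le_iff_abs_le)
qed

lemma norm_fin_le: "finite F \<Longrightarrow> (\<Sum>p\<in>F. (cmod (vec a p))\<^sup>2) \<le> (norm a)\<^sup>2"
  unfolding norm_ell2_def by (rule fin_le) simp_all



lemma norm_ell2_eq: "norm a = hs_norm (vec a)"
  by (simp add: norm_ell2_def)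

instance ell2 :: complete_space
proof
  fix X :: "nat \<Rightarrow> ell2" assume C: "Cauchy X"
  have pc: "Cauchy (\<lambda>n. vec (X n) p)" for p
  proof (rule CauchyI)
    fix e :: real assume "e > 0"
    then obtain M where M: "\<forall>m\<ge>M. \<forall>n\<ge>M. norm (X m - X n) < e" using CauchyD[OF C] by blast
    show "\<exists>M. \<forall>m\<ge>M. \<forall>n\<ge>M. norm (vec (X m) p - vec (X n) p) < e"
    proof (intro exI allI impI)
      fix m n assume "m \<ge> M" "n \<ge> M"
      have "cmod (vec (X m - X n) p) \<le> norm (X m - X n)" by (rule norm_vec_le)
      thus "norm (vec (X m) p - vec (X n) p) < e" using M \<open>m \<ge> M\<close> \<open>n \<ge> M\<close> by force
    qed
  qed
  define L where "L p = lim (\<lambda>n. vec (X n) p)" for p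
  have Lc: "(\<lambda>n. vec (X n) p) \<longlonglongrightarrow> L p" for p
    using pc[of p] by (simp add: L_def Cauchy_convergent_iff convergent_LIMSEQ_iff)
  have key: "\<exists>N. \<forall>m\<ge>N. HS (\<lambda>p. vec (X m) p - L p) \<and> hs_norm (\<lambda>p. vec (X m) p - L p) \<le> e"
    if "e > 0" for e
  proof -
    obtain N where N: "\<forall>m\<ge>N. \<forall>n\<ge>N. norm (X m - X n) < e" using CauchyD[OF C \<open>e>0\<close>] by blast
    have "HS (\<lambda>p. vec (X m) p - L p) \<and> hs_norm (\<lambda>p. vec (X m) p - L p) \<le> e" if "m \<ge> N" for m
    proof -
      have fs: "(\<Sum>p\<in>F. (cmod (vec (X m) p - L p))\<^sup>2) \<le> e\<^sup>2" if "finite F" for F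
      proof (rule tendsto_upperbound)
        show "(\<lambda>n. \<Sum>p\<in>F. (cmod (vec (X m) p - vec (X n) p))\<^sup>2) \<longlonglongrightarrow> (\<Sum>p\<in>F. (cmod (vec (X m) p - L p))\<^sup>2)"
          by (intro tendsto_intros Lc)
        show "\<forall>\<^sub>F n in sequentially. (\<Sum>p\<in>F. (cmod (vec (X m) p - vec (X n) p))\<^sup>2) \<le> e\<^sup>2"
          using eventually_ge_at_top[of N]
        proof eventually_elim
          case (elim n)
          have "(\<Sum>p\<in>F. (cmod (vec (X m - X n) p))\<^sup>2) \<le> (norm (X m - X n))\<^sup>2"
            by (rule norm_fin_le[OF that])
          also have "\<dots> \<le> e\<^sup>2" using N \<open>m \<ge> N\<close> elim
            by (intro power_mono) (auto intro: less_imp_le)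
          finally show ?case by simp
        qed
      qed simp
      have hs: "HS (\<lambda>p. vec (X m) p - L p)" unfolding HS_def
        by (rule nonneg_bdd_above_summable_on) (auto intro!: bdd_aboveI2 fs)
      have "(hs_norm (\<lambda>p. vec (X m) p - L p))\<^sup>2 \<le> e\<^sup>2" unfolding hs_norm_sq
        by (rule infsum_le_finite_sums) (use hs fs in \<open>auto simp: HS_def\<close>)
      hence "hs_norm (\<lambda>p. vec (X m) p - L p) \<le> e"
        by (rule power2_le_imp_le) (use \<open>e > 0\<close> in linarith)
      with hs show ?thesis by simp
    qed
    thus ?thesis by blast
  qed
  obtain N1 where N1: "HS (\<lambda>p. vec (X N1) p - L p)" using key[of 1] by auto
  have HSL: "HS L" using HS_diff[OF HS_vec[of "X N1"] N1] by simp
  have "X \<longlonglongrightarrow> mk L"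
    unfolding LIMSEQ_iff
  proof (intro allI impI)
    fix r :: real assume "r > 0"
    then obtain N where N: "\<forall>m\<ge>N. HS (\<lambda>p. vec (X m) p - L p) \<and> hs_norm (\<lambda>p. vec (X m) p - L p) \<le> r/2"
      using key[of "r/2"] by auto
    show "\<exists>no. \<forall>n\<ge>no. norm (X n - mk L) < r"
    proof (intro exI allI impI)
      fix n assume "n \<ge> N"
      have "norm (X n - mk L) = hs_norm (\<lambda>p. vec (X n) p - L p)"
        by (simp add: norm_ell2_eq HSL)
      also have "\<dots> \<le> r/2" using N \<open>n \<ge> N\<close> by blast
      finally show "norm (X n - mk L) < r" using \<open>r > 0\<close> by simp
    qed
  qed
  thus "convergent X" by (auto simp: convergent_def)
qed



lemma parallelogram:
  fixes a b :: "'a::real_inner"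
  shows "(norm (a+b))\<^sup>2 + (norm (a-b))\<^sup>2 = 2*(norm a)\<^sup>2 + 2*(norm b)\<^sup>2"
  by (simp add: power2_norm_eq_inner inner_add inner_diff inner_commute)

lemma norm_expand:
  fixes w y :: "'a::real_inner"
  shows "(norm (w - t *\<^sub>R y))\<^sup>2 = (norm w)\<^sup>2 - 2 * t * inner w y + t\<^sup>2 * (norm y)\<^sup>2"
  unfolding power2_norm_eq_inner by (simp add: inner_diff inner_commute power2_eq_square algebra_simps)

lemma proj_exists:
  fixes S :: "'a::{real_inner,complete_space} set"
  assumes cl: "closed S" and ne: "0 \<in> S"
    and add: "\<And>x y. x\<in>S \<Longrightarrow> y\<in>S \<Longrightarrow> x+y\<in>S" and sc: "\<And>c x. x\<in>S \<Longrightarrow> c *\<^sub>R x \<in> S"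
  shows "\<exists>x\<in>S. \<forall>y\<in>S. inner (z - x) y = 0"
proof -
  define d where "d = Inf ((\<lambda>y. (norm (z - y))\<^sup>2) ` S)"
  have bdd: "bdd_below ((\<lambda>y. (norm (z - y))\<^sup>2) ` S)"
    by (rule bdd_belowI2[where m=0]) simp
  have dle: "d \<le> (norm (z - y))\<^sup>2" if "y \<in> S" for y
    unfolding d_def by (rule cInf_lower) (use that bdd in auto)
  have "\<exists>y\<in>S. (norm (z - y))\<^sup>2 < d + 1 / Suc n" for n
  proof -
    have "Inf ((\<lambda>y. (norm (z - y))\<^sup>2) ` S) < d + 1 / Suc n" unfolding d_def by simp
    from cInf_lessD[OF _ this] ne show ?thesis by auto
  qed
  then obtain Y where Y: "\<And>n. Y n \<in> S" "\<And>n. (norm (z - Y n))\<^sup>2 < d + 1 / Suc n"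
    by metis
  have mid: "(norm (Y m - Y n))\<^sup>2 \<le> 2 / Suc m + 2 / Suc n" for m n
  proof -
    have "(norm ((z - Y m) + (z - Y n)))\<^sup>2 + (norm ((z - Y m) - (z - Y n)))\<^sup>2
          = 2*(norm (z - Y m))\<^sup>2 + 2*(norm (z - Y n))\<^sup>2" by (rule parallelogram)
    moreover have "(z - Y m) + (z - Y n) = 2 *\<^sub>R (z - ((1/2) *\<^sub>R (Y m + Y n)))"
      by (simp add: algebra_simps scaleR_2)
    moreover have "(1/2) *\<^sub>R (Y m + Y n) \<in> S" using Y add sc by blast
    hence "d \<le> (norm (z - ((1/2) *\<^sub>R (Y m + Y n))))\<^sup>2" by (rule dle)
    moreover have "(z - Y m) - (z - Y n) = - (Y m - Y n)" by simp
    ultimately show ?thesis using Y(2)[of m] Y(2)[of n]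
      by (simp add: power2_eq_square norm_minus_commute[of "Y n" "Y m"])
  qed
  have "Cauchy Y"
  proof (rule CauchyI)
    fix e :: real assume "e > 0"
    obtain N where N: "4 / e\<^sup>2 < real N" using reals_Archimedean2 by blast
    have "4 / Suc N < e\<^sup>2" using N \<open>e > 0\<close>
      by (simp add: field_simps) (smt (verit) mult_strict_left_mono zero_less_power)
    show "\<exists>M. \<forall>m\<ge>M. \<forall>n\<ge>M. norm (Y m - Y n) < e"
    proof (intro exI allI impI)
      fix m n assume "m \<ge> N" "n \<ge> N"
      have "2 / Suc m \<le> 2 / Suc N" "2 / Suc n \<le> 2 / Suc N"
        using \<open>m \<ge> N\<close> \<open>n \<ge> N\<close> by (simp_all add: frac_le)
      hence "(norm (Y m - Y n))\<^sup>2 < e\<^sup>2" using mid[of m n] \<open>4 / Suc N < e\<^sup>2\<close> by simp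
      thus "norm (Y m - Y n) < e" using \<open>e > 0\<close> by (simp add: power_less_imp_less_base)
    qed
  qed
  then obtain x where x: "Y \<longlonglongrightarrow> x" using Cauchy_convergent convergent_def by blast
  have xS: "x \<in> S" using closed_sequentially[OF cl] Y(1) x by blast
  have dx: "(norm (z - x))\<^sup>2 \<le> d"
  proof (rule LIMSEQ_le)
    show "(\<lambda>n. (norm (z - Y n))\<^sup>2) \<longlonglongrightarrow> (norm (z - x))\<^sup>2" by (intro tendsto_intros x)
    show "(\<lambda>n. d + 1 / Suc n) \<longlonglongrightarrow> d"
      using tendsto_add[OF tendsto_const[of d] LIMSEQ_inverse_real_of_nat] by (simp add: inverse_eq_divide)
    show "\<exists>N. \<forall>n\<ge>N. (norm (z - Y n))\<^sup>2 \<le> d + 1 / Suc n" using Y(2) less_imp_le by blast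
  qed
  show ?thesis
  proof (intro bexI[OF _ xS] ballI)
    fix y assume "y \<in> S"
    define w where "w = z - x"
    show "inner (z - x) y = 0"
    proof (cases "y = 0")
      case True thus ?thesis by simp
    next
      case False
      define a where "a = inner w y"
      define b where "b = (norm y)\<^sup>2"
      have b: "b > 0" using False by (simp add: b_def)
      define t where "t = a / b"
      have "x + t *\<^sub>R y \<in> S" using xS \<open>y \<in> S\<close> add sc by blast
      hence "d \<le> (norm (z - (x + t *\<^sub>R y)))\<^sup>2" by (rule dle)
      also have "z - (x + t *\<^sub>R y) = w - t *\<^sub>R y" by (simp add: w_def)
      finally have "(norm w)\<^sup>2 \<le> (norm w)\<^sup>2 - 2 * t * a + t\<^sup>2 * b"
        using dx unfolding norm_expand a_def b_def w_def by linarith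
      hence "0 \<le> - 2 * t * a + t\<^sup>2 * b" by linarith
      also have "- 2 * t * a + t\<^sup>2 * b = - (a\<^sup>2 / b)"
        using b by (simp add: t_def power2_eq_square field_simps)
      finally have "a\<^sup>2 / b \<le> 0" by linarith
      hence "a\<^sup>2 / b * b \<le> 0" using b by (intro mult_nonpos_nonneg) auto
      hence "a\<^sup>2 \<le> 0" using b by simp
      hence "a = 0" by simp
      thus ?thesis by (simp add: a_def w_def)
    qed
  qed
qed



definition cs :: "complex \<Rightarrow> ell2 \<Rightarrow> ell2" where "cs c a = mk (\<lambda>p. c * vec a p)"
definition th :: "ell2 \<Rightarrow> ell2" where "th a = mk (Theta (vec a))"
definition sg :: "int \<times> int \<Rightarrow> complex" where
  "sg p = (if fst p + 2 * snd p > 0 then 1 else if fst p + 2 * snd p < 0 then -1 else 0)"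
definition sm :: "ell2 \<Rightarrow> ell2" where "sm a = mk (\<lambda>p. sg p * vec a p)"
definition cinner :: "ell2 \<Rightarrow> ell2 \<Rightarrow> complex" where "cinner a b = hs_inner (vec a) (vec b)"

lemma sg_le: "cmod (sg p) \<le> 1"
  by (simp add: sg_def)

lemma vec_cs[simp]: "vec (cs c a) = (\<lambda>p. c * vec a p)"
  by (simp add: cs_def HS_scale)
lemma vec_th[simp]: "vec (th a) = Theta (vec a)"
  by (simp add: th_def HS_Theta)
lemma vec_sm[simp]: "vec (sm a) = (\<lambda>p. sg p * vec a p)"
  by (simp add: sm_def HS_bmult sg_le)

lemma th_th[simp]: "th (th a) = a"
  by (rule ell2_eqI) simp

lemma Theta_add: "Theta (\<lambda>p. f p + g p) = (\<lambda>p. Theta f p + Theta g p)"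
  by (simp add: Theta_def fun_eq_iff)
lemma Theta_scale: "Theta (\<lambda>p. c * f p) = (\<lambda>p. c * Theta f p)"
  by (simp add: Theta_def fun_eq_iff)
lemma Theta_diff: "Theta (\<lambda>p. f p - g p) = (\<lambda>p. Theta f p - Theta g p)"
  by (simp add: Theta_def fun_eq_iff)
lemma Theta_uminus: "Theta (\<lambda>p. - f p) = (\<lambda>p. - Theta f p)"
  by (simp add: Theta_def fun_eq_iff)

lemma th_add: "th (a + b) = th a + th b"
  by (rule ell2_eqI) (simp add: Theta_add)
lemma th_diff: "th (a - b) = th a - th b"
  by (rule ell2_eqI) (simp add: Theta_diff)
lemma th_uminus: "th (- a) = - th a"
  by (rule ell2_eqI) (simp add: Theta_uminus)
lemma th_scaleR: "th (r *\<^sub>R a) = r *\<^sub>R th a"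
  by (rule ell2_eqI) (simp add: Theta_scale)
lemma th_cs: "th (cs c a) = cs c (th a)"
  by (rule ell2_eqI) (simp add: Theta_scale)

lemma cinner_add_left: "cinner (a + b) c = cinner a c + cinner b c"
  by (simp add: cinner_def hs_inner_add_left)
lemma cinner_add_right: "cinner a (b + c) = cinner a b + cinner a c"
  by (simp add: cinner_def hs_inner_add_right)
lemma cinner_cs_left: "cinner (cs c a) b = cnj c * cinner a b"
  by (simp add: cinner_def hs_inner_scale_left)
lemma cinner_cs_right: "cinner a (cs c b) = c * cinner a b"
  by (simp add: cinner_def hs_inner_scale_right)
lemma cs_scaleR: "r *\<^sub>R a = cs (complex_of_real r) a"
  by (rule ell2_eqI) simp
lemma cs_uminus: "- a = cs (-1) a"
  by (rule ell2_eqI) simp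
lemma cs_diff: "a - b = a + cs (-1) b"
  by (rule ell2_eqI) simp
lemma cinner_diff_left: "cinner (a - b) c = cinner a c - cinner b c"
  by (simp add: cs_diff cinner_add_left cinner_cs_left)
lemma cinner_diff_right: "cinner a (b - c) = cinner a b - cinner a c"
  by (simp add: cs_diff cinner_add_right cinner_cs_right)
lemma cinner_scaleR_left: "cinner (r *\<^sub>R a) b = complex_of_real r * cinner a b"
  by (simp add: cs_scaleR cinner_cs_left)
lemma cinner_scaleR_right: "cinner a (r *\<^sub>R b) = complex_of_real r * cinner a b"
  by (simp add: cs_scaleR cinner_cs_right)
lemma cinner_uminus_left: "cinner (- a) b = - cinner a b"
  by (simp add: cs_uminus cinner_cs_left)
lemma cinner_uminus_right: "cinner a (- b) = - cinner a b"
  by (simp add: cs_uminus cinner_cs_right)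
lemma cinner_zero_left[simp]: "cinner 0 b = 0"
  by (simp add: cinner_def hs_inner_def)
lemma cinner_zero_right[simp]: "cinner a 0 = 0"
  by (simp add: cinner_def hs_inner_def)
lemma cinner_cnj: "cinner b a = cnj (cinner a b)"
  by (simp add: cinner_def hs_inner_cnj[of "vec b"])
lemma cinner_th: "cinner (th a) b = cinner a (th b)"
  by (simp add: cinner_def hs_inner_Theta)
lemma Re_cinner: "Re (cinner a b) = inner a b"
  by (simp add: cinner_def inner_ell2_def)
lemma cinner_self: "cinner a a = complex_of_real ((norm a)\<^sup>2)"
  by (simp add: cinner_def hs_inner_self norm_ell2_def hs_norm_sq)
lemma Im_cinner: "Im (cinner a b) = inner (cs \<i> a) b"
  by (simp add: Re_cinner[symmetric] cinner_cs_left)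

lemma norm_cs: "norm (cs c a) = cmod c * norm a"
proof -
  have "(norm (cs c a))\<^sup>2 = (\<Sum>\<^sub>\<infinity>p. (cmod c)\<^sup>2 * (cmod (vec a p))\<^sup>2)"
    by (simp add: norm_ell2_def hs_norm_sq norm_mult power_mult_distrib)
  also have "\<dots> = (cmod c)\<^sup>2 * (\<Sum>\<^sub>\<infinity>p. (cmod (vec a p))\<^sup>2)"
    by (rule infsum_cmult_right')
  also have "\<dots> = (cmod c * norm a)\<^sup>2"
    by (simp add: norm_ell2_def hs_norm_sq power_mult_distrib)
  finally have "(norm (cs c a))\<^sup>2 = (cmod c * norm a)\<^sup>2" .
  thus ?thesis by (simp add: power2_eq_iff_nonneg)
qed

lemma norm_th: "norm (th a) = norm a"
  by (simp add: norm_ell2_def hs_norm_def infsum_Theta[of "\<lambda>z. (cmod z)\<^sup>2"])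

lemma norm_sm: "norm (sm a) \<le> norm a"
proof -
  have "(\<Sum>\<^sub>\<infinity>p. (cmod (sg p * vec a p))\<^sup>2) \<le> (\<Sum>\<^sub>\<infinity>p. (cmod (vec a p))\<^sup>2)"
  proof (rule infsum_mono)
    show "(\<lambda>p. (cmod (sg p * vec a p))\<^sup>2) summable_on UNIV"
      using HS_vec[of "sm a"] by (simp add: HS_def)
    show "(\<lambda>p. (cmod (vec a p))\<^sup>2) summable_on UNIV"
      using HS_vec[of a] by (simp add: HS_def)
    fix p
    show "(cmod (sg p * vec a p))\<^sup>2 \<le> (cmod (vec a p))\<^sup>2"
      by (simp add: sg_def norm_mult)
  qed
  thus ?thesis by (simp add: norm_ell2_def hs_norm_def)
qed

lemma bl_cs: "bounded_linear (cs c)"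
  by (rule bounded_linear_intro[where K="cmod c"])
     (auto intro!: ell2_eqI simp: norm_cs algebra_simps)
lemma bl_th: "bounded_linear th"
  by (rule bounded_linear_intro[where K=1]) (simp_all add: th_add th_scaleR norm_th)
lemma bl_sm: "bounded_linear sm"
  by (rule bounded_linear_intro[where K=1])
     (auto intro!: ell2_eqI simp: norm_sm algebra_simps)

lemma cont_cs[continuous_intros]: "continuous_on S f \<Longrightarrow> continuous_on S (\<lambda>x. cs c (f x))"
  using bounded_linear.continuous_on[OF bl_cs] by blast
lemma cont_th[continuous_intros]: "continuous_on S f \<Longrightarrow> continuous_on S (\<lambda>x. th (f x))"
  using bounded_linear.continuous_on[OF bl_th] by blast
lemma cont_sm[continuous_intros]: "continuous_on S f \<Longrightarrow> continuous_on S (\<lambda>x. sm (f x))"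
  using bounded_linear.continuous_on[OF bl_sm] by blast



lemma Dop_app: "Dop \<beta> f (n, k) = \<beta> (k + n - 1) * f (n - 1, k) - \<beta> (- k - 1) * f (n - 1, k + 1)"
  by (simp add: Dop_def)

lemma Dop_add: "Dop \<beta> (\<lambda>p. f p + g p) = (\<lambda>p. Dop \<beta> f p + Dop \<beta> g p)"
  by (rule ext) (auto simp: Dop_def algebra_simps split: prod.splits)

lemma Dop_scale: "Dop \<beta> (\<lambda>p. c * f p) = (\<lambda>p. c * Dop \<beta> f p)"
  by (rule ext) (auto simp: Dop_def algebra_simps split: prod.splits)

lemma Dop_Theta: "Dop \<beta> (Theta f) = (\<lambda>p. - Theta (Dop \<beta> f) p)"
proof (rule ext)
  fix p :: "int \<times> int"
  obtain n k where p: "p = (n, k)" by fastforce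
  have e1: "- k - (n - 1) = - k - n + 1" and e2: "- (k + 1) - (n - 1) = - k - n"
    and e3: "- k - n + n - 1 = - k - 1" and e4: "- (- k - n) - 1 = k + n - 1" by simp_all
  show "Dop \<beta> (Theta f) p = - Theta (Dop \<beta> f) p"
    unfolding p by (simp add: Dop_app Theta_def e1 e2 e3 e4 algebra_simps)
qed

lemma odd_zero:
  assumes odd: "\<And>p. Theta f p = - f p" and "n + 2 * k = 0"
  shows "f (n, k) = 0"
proof -
  have "Theta f (n, k) = f (n, k)" using assms(2) by (simp add: Theta_def) (smt (verit))
  thus ?thesis using odd[of "(n,k)"] by simp
qed

lemma Dop_sg:
  assumes odd: "\<And>p. Theta f p = - f p"
  shows "Dop \<beta> (\<lambda>p. sg p * f p) p = sg p * Dop \<beta> f p"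
proof -
  obtain n k where p: "p = (n, k)" by fastforce
  consider "n + 2 * k \<ge> 2" | "n + 2 * k = 1" | "n + 2 * k = 0" | "n + 2 * k = -1" | "n + 2 * k \<le> -2"
    by linarith
  thus ?thesis
  proof cases
    case 1
    thus ?thesis unfolding p by (simp add: Dop_app sg_def)
  next
    case 2
    have "f (n - 1, k) = 0" by (rule odd_zero[OF odd]) (use 2 in simp)
    thus ?thesis using 2 unfolding p by (simp add: Dop_app sg_def)
  next
    case 3
    have "Theta f (n - 1, k) = - f (n - 1, k)" by (rule odd)
    moreover have "Theta f (n - 1, k) = f (n - 1, k + 1)"
      using 3 by (simp add: Theta_def) (smt (verit))
    moreover have "\<beta> (k + n - 1) = \<beta> (- k - 1)" using 3 by (simp add: algebra_simps) (smt (verit))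
    ultimately show ?thesis using 3 unfolding p by (simp add: Dop_app sg_def algebra_simps)
  next
    case 4
    have "f (n - 1, k + 1) = 0" by (rule odd_zero[OF odd]) (use 4 in simp)
    thus ?thesis using 4 unfolding p by (simp add: Dop_app sg_def)
  next
    case 5
    thus ?thesis unfolding p by (simp add: Dop_app sg_def)
  qed
qed

lemma in_D_add: "in_D f \<Longrightarrow> in_D g \<Longrightarrow> in_D (\<lambda>p. f p + g p)"
  unfolding in_D_def
  by (rule finite_subset[of _ "{p. f p \<noteq> 0} \<union> {p. g p \<noteq> 0}"]) auto

lemma in_D_scale: "in_D f \<Longrightarrow> in_D (\<lambda>p. c * f p)"
  unfolding in_D_def by (rule finite_subset[of _ "{p. f p \<noteq> 0}"]) auto

lemma in_D_bmult: "in_D f \<Longrightarrow> in_D (\<lambda>p. s p * f p)"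
  unfolding in_D_def by (rule finite_subset[of _ "{p. f p \<noteq> 0}"]) auto

lemma inj_th: "inj (\<lambda>(n::int, k::int). (n, - k - n))"
  using bij_th bij_is_inj by blast

lemma in_D_Theta: "in_D f \<Longrightarrow> in_D (Theta f)"
  unfolding in_D_def
proof -
  assume "finite {p. f p \<noteq> 0}"
  hence "finite ((\<lambda>(n::int, k::int). (n, - k - n)) -` {p. f p \<noteq> 0})"
    by (rule finite_vimageI[OF _ inj_th])
  moreover have "{p. Theta f p \<noteq> 0} = (\<lambda>(n::int, k::int). (n, - k - n)) -` {p. f p \<noteq> 0}"
    by (auto simp: Theta_app)
  ultimately show "finite {p. Theta f p \<noteq> 0}" by simp
qed

lemma in_D_Dop: "in_D f \<Longrightarrow> in_D (Dop \<beta> f)"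
  unfolding in_D_def
proof -
  assume F: "finite {p. f p \<noteq> 0}"
  have "{p. Dop \<beta> f p \<noteq> 0} \<subseteq> (\<lambda>(n, k). (n + 1, k)) ` {p. f p \<noteq> 0} \<union> (\<lambda>(n, k). (n + 1, k - 1)) ` {p. f p \<noteq> 0}"
  proof
    fix p assume "p \<in> {p. Dop \<beta> f p \<noteq> 0}"
    then obtain n k where p: "p = (n, k)" and ne: "Dop \<beta> f (n, k) \<noteq> 0" by (cases p) auto
    from ne have "f (n - 1, k) \<noteq> 0 \<or> f (n - 1, k + 1) \<noteq> 0" by (auto simp: Dop_app)
    thus "p \<in> (\<lambda>(n, k). (n + 1, k)) ` {p. f p \<noteq> 0} \<union> (\<lambda>(n, k). (n + 1, k - 1)) ` {p. f p \<noteq> 0}"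
    proof
      assume "f (n - 1, k) \<noteq> 0"
      hence "(n - 1, k) \<in> {p. f p \<noteq> 0}" by simp
      hence "(\<lambda>(n, k). (n + 1, k)) (n - 1, k) \<in> (\<lambda>(n, k). (n + 1, k)) ` {p. f p \<noteq> 0}" by (rule imageI)
      thus ?thesis unfolding p by simp
    next
      assume "f (n - 1, k + 1) \<noteq> 0"
      hence "(n - 1, k + 1) \<in> {p. f p \<noteq> 0}" by simp
      hence "(\<lambda>(n, k). (n + 1, k - 1)) (n - 1, k + 1) \<in> (\<lambda>(n, k). (n + 1, k - 1)) ` {p. f p \<noteq> 0}" by (rule imageI)
      thus ?thesis unfolding p by simp
    qed
  qed
  thus "finite {p. Dop \<beta> f p \<noteq> 0}" by (rule finite_subset) (use F in auto)
qed

definition Dset :: "(int \<Rightarrow> complex) \<Rightarrow> (ell2 \<times> ell2) set" where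
  "Dset \<beta> = (\<lambda>\<phi>. (mk \<phi>, mk (Dop \<beta> \<phi>))) ` {\<phi>. in_D \<phi>}"

definition GG :: "(int \<Rightarrow> complex) \<Rightarrow> (ell2 \<times> ell2) set" where
  "GG \<beta> = closure (Dset \<beta>)"

lemma closure_map:
  assumes "continuous_on UNIV L" "\<And>x. x \<in> A \<Longrightarrow> L x \<in> B" "x \<in> closure A"
  shows "L x \<in> closure B"
proof -
  have "L ` closure A \<subseteq> closure B"
    by (rule image_closure_subset) (use assms closure_subset in \<open>auto intro: continuous_on_subset\<close>)
  thus ?thesis using assms(3) by blast
qed

lemma tendsto_ell2:
  assumes "\<And>j. HS (F j)" "HS g"
  shows "(\<lambda>j. hs_norm (F j - g)) \<longlonglongrightarrow> 0 \<longleftrightarrow> (\<lambda>j. mk (F j)) \<longlonglongrightarrow> mk g"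
proof -
  have "hs_norm (F j - g) = norm (mk (F j) - mk g)" for j
    using assms by (simp add: norm_ell2_def fun_diff_def)
  hence "(\<lambda>j. hs_norm (F j - g)) = (\<lambda>j. norm (mk (F j) - mk g))" by auto
  thus ?thesis by (simp add: tendsto_norm_zero_iff LIM_zero_iff)
qed

lemma closD_iff: "closD \<beta> g h \<longleftrightarrow> HS g \<and> HS h \<and> (mk g, mk h) \<in> GG \<beta>"
proof
  assume c: "closD \<beta> g h"
  then obtain \<phi> where \<phi>: "\<And>j. in_D (\<phi> j)" "(\<lambda>j. hs_norm (\<phi> j - g)) \<longlonglongrightarrow> 0"
      "(\<lambda>j. hs_norm (Dop \<beta> (\<phi> j) - h)) \<longlonglongrightarrow> 0" and hs: "HS g" "HS h"
    unfolding closD_def by blast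
  have "(\<lambda>j. (mk (\<phi> j), mk (Dop \<beta> (\<phi> j)))) \<longlonglongrightarrow> (mk g, mk h)"
    using \<phi> hs by (intro tendsto_Pair) (simp_all add: tendsto_ell2 in_D_HS in_D_Dop)
  moreover have "(mk (\<phi> j), mk (Dop \<beta> (\<phi> j))) \<in> Dset \<beta>" for j
    using \<phi>(1) by (auto simp: Dset_def)
  ultimately show "HS g \<and> HS h \<and> (mk g, mk h) \<in> GG \<beta>"
    unfolding GG_def closure_sequential using hs
    by (intro conjI exI[of _ "\<lambda>j. (mk (\<phi> j), mk (Dop \<beta> (\<phi> j)))"]) auto
next
  assume a: "HS g \<and> HS h \<and> (mk g, mk h) \<in> GG \<beta>"
  then obtain s where s: "\<And>n. s n \<in> Dset \<beta>" "s \<longlonglongrightarrow> (mk g, mk h)"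
    unfolding GG_def closure_sequential by blast
  have "\<forall>n. \<exists>\<phi>. in_D \<phi> \<and> s n = (mk \<phi>, mk (Dop \<beta> \<phi>))" using s(1) by (auto simp: Dset_def)
  then obtain \<phi> where \<phi>: "\<And>n. in_D (\<phi> n)" "\<And>n. s n = (mk (\<phi> n), mk (Dop \<beta> (\<phi> n)))" by metis
  have "(\<lambda>n. mk (\<phi> n)) \<longlonglongrightarrow> mk g" using tendsto_fst[OF s(2)] \<phi>(2) by simp
  moreover have "(\<lambda>n. mk (Dop \<beta> (\<phi> n))) \<longlonglongrightarrow> mk h" using tendsto_snd[OF s(2)] \<phi>(2) by simp
  ultimately have "(\<lambda>j. hs_norm (\<phi> j - g)) \<longlonglongrightarrow> 0" "(\<lambda>j. hs_norm (Dop \<beta> (\<phi> j) - h)) \<longlonglongrightarrow> 0"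
    using a \<phi>(1) tendsto_ell2[of \<phi> g] tendsto_ell2[of "\<lambda>j. Dop \<beta> (\<phi> j)" h]
    by (auto simp: in_D_HS in_D_Dop)
  thus "closD \<beta> g h" unfolding closD_def using a \<phi>(1) by blast
qed

lemma Dset_mem: "in_D \<phi> \<Longrightarrow> (mk \<phi>, mk (Dop \<beta> \<phi>)) \<in> Dset \<beta>"
  by (auto simp: Dset_def)

lemma GG_add: "(a, b) \<in> GG \<beta> \<Longrightarrow> (c, d) \<in> GG \<beta> \<Longrightarrow> (a + c, b + d) \<in> GG \<beta>"
proof -
  assume "(a, b) \<in> GG \<beta>" "(c, d) \<in> GG \<beta>"
  hence "((a, b), (c, d)) \<in> closure (Dset \<beta> \<times> Dset \<beta>)" by (simp add: closure_Times GG_def)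
  hence "(\<lambda>z. (fst (fst z) + fst (snd z), snd (fst z) + snd (snd z))) ((a, b), (c, d)) \<in> closure (Dset \<beta>)"
  proof (rule closure_map[rotated 2])
    show "continuous_on UNIV (\<lambda>z::(ell2\<times>ell2)\<times>(ell2\<times>ell2). (fst (fst z) + fst (snd z), snd (fst z) + snd (snd z)))"
      by (intro continuous_intros)
    fix z assume "z \<in> Dset \<beta> \<times> Dset \<beta>"
    then obtain \<phi> \<psi> where z: "in_D \<phi>" "in_D \<psi>" "z = ((mk \<phi>, mk (Dop \<beta> \<phi>)), (mk \<psi>, mk (Dop \<beta> \<psi>)))"
      by (auto simp: Dset_def)
    have "(mk \<phi> + mk \<psi>, mk (Dop \<beta> \<phi>) + mk (Dop \<beta> \<psi>)) = (mk (\<lambda>p. \<phi> p + \<psi> p), mk (Dop \<beta> (\<lambda>p. \<phi> p + \<psi> p)))"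
      using z by (auto intro!: ell2_eqI simp: Dop_add in_D_HS in_D_Dop in_D_add HS_add)
    thus "(fst (fst z) + fst (snd z), snd (fst z) + snd (snd z)) \<in> Dset \<beta>"
      using z by (simp add: Dset_mem in_D_add)
  qed
  thus ?thesis by (simp add: GG_def)
qed

lemma GG_cs: "(a, b) \<in> GG \<beta> \<Longrightarrow> (cs c a, cs c b) \<in> GG \<beta>"
proof -
  assume "(a, b) \<in> GG \<beta>"
  hence "(\<lambda>z. (cs c (fst z), cs c (snd z))) (a, b) \<in> closure (Dset \<beta>)"
    unfolding GG_def
  proof (rule closure_map[rotated 2])
    show "continuous_on UNIV (\<lambda>z::ell2\<times>ell2. (cs c (fst z), cs c (snd z)))"
      by (intro continuous_intros)
    fix z assume "z \<in> Dset \<beta>"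
    then obtain \<phi> where z: "in_D \<phi>" "z = (mk \<phi>, mk (Dop \<beta> \<phi>))" by (auto simp: Dset_def)
    have "(cs c (mk \<phi>), cs c (mk (Dop \<beta> \<phi>))) = (mk (\<lambda>p. c * \<phi> p), mk (Dop \<beta> (\<lambda>p. c * \<phi> p)))"
      using z by (auto intro!: ell2_eqI simp: Dop_scale in_D_HS in_D_Dop HS_scale)
    thus "(cs c (fst z), cs c (snd z)) \<in> Dset \<beta>" using z by (simp add: Dset_mem in_D_scale)
  qed
  thus ?thesis by (simp add: GG_def)
qed

lemma GG_th: "(a, b) \<in> GG \<beta> \<Longrightarrow> (th a, - th b) \<in> GG \<beta>"
proof -
  assume "(a, b) \<in> GG \<beta>"
  hence "(\<lambda>z. (th (fst z), - th (snd z))) (a, b) \<in> closure (Dset \<beta>)"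
    unfolding GG_def
  proof (rule closure_map[rotated 2])
    show "continuous_on UNIV (\<lambda>z::ell2\<times>ell2. (th (fst z), - th (snd z)))"
      by (intro continuous_intros)
    fix z assume "z \<in> Dset \<beta>"
    then obtain \<phi> where z: "in_D \<phi>" "z = (mk \<phi>, mk (Dop \<beta> \<phi>))" by (auto simp: Dset_def)
    have "(th (mk \<phi>), - th (mk (Dop \<beta> \<phi>))) = (mk (Theta \<phi>), mk (Dop \<beta> (Theta \<phi>)))"
      using z by (auto intro!: ell2_eqI simp: Dop_Theta in_D_HS in_D_Dop HS_Theta HS_uminus)
    thus "(th (fst z), - th (snd z)) \<in> Dset \<beta>" using z by (simp add: Dset_mem in_D_Theta)
  qed
  thus ?thesis by (simp add: GG_def)
qed

lemma GG_odd:
  assumes "(a, b) \<in> GG \<beta>" "th a = - a"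
  shows "(sm a, sm ((1/2) *\<^sub>R (b + th b))) \<in> GG \<beta>"
proof -
  let ?L = "\<lambda>z::ell2\<times>ell2. (sm ((1/2) *\<^sub>R (fst z - th (fst z))), sm ((1/2) *\<^sub>R (snd z + th (snd z))))"
  have "?L (a, b) \<in> closure (Dset \<beta>)"
    using assms(1) unfolding GG_def
  proof (rule closure_map[rotated 2])
    show "continuous_on UNIV ?L" by (intro continuous_intros)
    fix z assume "z \<in> Dset \<beta>"
    then obtain \<phi> where z: "in_D \<phi>" "z = (mk \<phi>, mk (Dop \<beta> \<phi>))" by (auto simp: Dset_def)
    define \<psi> where "\<psi> = (\<lambda>p. (1/2) * (\<phi> p + (-1) * Theta \<phi> p))"
    have odd: "Theta \<psi> p = - \<psi> p" for p
      by (simp add: \<psi>_def Theta_def case_prod_beta algebra_simps)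
    have Dpsi: "Dop \<beta> \<psi> = (\<lambda>p. (1/2) * (Dop \<beta> \<phi> p + Theta (Dop \<beta> \<phi>) p))"
    proof -
      have "Dop \<beta> \<psi> = (\<lambda>p. (1/2) * (Dop \<beta> \<phi> p + (-1) * (- Theta (Dop \<beta> \<phi>) p)))"
        unfolding \<psi>_def by (simp only: Dop_scale Dop_add Dop_Theta)
      thus ?thesis by simp
    qed
    have iD: "in_D \<psi>" unfolding \<psi>_def
      using in_D_add[OF z(1) in_D_scale[OF in_D_Theta[OF z(1)], of "-1"]]
      by (intro in_D_scale)
    have v1: "vec (mk (\<lambda>p. sg p * \<psi> p)) = (\<lambda>p. sg p * \<psi> p)"
      using iD by (simp add: in_D_HS HS_bmult sg_le)
    have v2: "vec (mk (Dop \<beta> (\<lambda>p. sg p * \<psi> p))) = Dop \<beta> (\<lambda>p. sg p * \<psi> p)"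
      using iD by (simp add: in_D_HS in_D_Dop in_D_bmult)
    have c1: "sm ((1/2) *\<^sub>R (mk \<phi> - th (mk \<phi>))) = mk (\<lambda>p. sg p * \<psi> p)"
      by (rule ell2_eqI, subst v1) (simp add: \<psi>_def in_D_HS z(1))
    have c2: "sm ((1/2) *\<^sub>R (mk (Dop \<beta> \<phi>) + th (mk (Dop \<beta> \<phi>)))) = mk (Dop \<beta> (\<lambda>p. sg p * \<psi> p))"
      by (rule ell2_eqI, subst v2) (simp add: Dop_sg[OF odd] Dpsi in_D_HS in_D_Dop z(1))
    have "?L z = (mk (\<lambda>p. sg p * \<psi> p), mk (Dop \<beta> (\<lambda>p. sg p * \<psi> p)))"
      using z(2) c1 c2 by simp
    thus "?L z \<in> Dset \<beta>" using iD by (simp add: Dset_mem in_D_bmult)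
  qed
  moreover have "(1/2) *\<^sub>R (a - th a) = a" using assms(2) by (simp add: scaleR_2[symmetric] algebra_simps)
  ultimately show ?thesis by (simp add: GG_def)
qed



definition Rr :: "(int \<Rightarrow> complex) \<Rightarrow> real \<Rightarrow> ell2 \<Rightarrow> ell2 \<Rightarrow> ell2 \<Rightarrow> bool" where
  "Rr \<beta> m2 F G H \<longleftrightarrow> (G, H) \<in> GG \<beta> \<and>
     (\<forall>X Y. (X, Y) \<in> GG \<beta> \<longrightarrow> cinner X F = cinner Y H + complex_of_real m2 * cinner X G)"

lemma hs_inner_diff_right: "HS f \<Longrightarrow> HS g \<Longrightarrow> HS h \<Longrightarrow>
   hs_inner f (\<lambda>p. g p - h p) = hs_inner f g - hs_inner f h"
  using hs_inner_add_right[of f g "\<lambda>p. (-1) * h p"] hs_inner_scale_right[of f "-1" h]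
  by (simp add: HS_scale HS_uminus)

lemma GG_closD: "(X, Y) \<in> GG \<beta> \<longleftrightarrow> closD \<beta> (vec X) (vec Y)"
  by (simp add: closD_iff vec_inverse)

lemma res_iff:
  assumes "HS f"
  shows "is_resolvent \<beta> m2 f g \<longleftrightarrow> HS g \<and> (\<exists>H. Rr \<beta> m2 (mk f) (mk g) H)"
proof
  assume "is_resolvent \<beta> m2 f g"
  then obtain w h where c: "closD \<beta> g h" and a: "adjD \<beta> h w" and e: "\<And>p. w p + complex_of_real m2 * g p = f p"
    unfolding is_resolvent_def DstarD_def by blast
  have hs: "HS g" "HS h" "HS w" using c a by (auto simp: closD_def adjD_def)
  have w: "w = (\<lambda>p. f p - complex_of_real m2 * g p)" using e by (auto simp: fun_eq_iff algebra_simps)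
  have "Rr \<beta> m2 (mk f) (mk g) (mk h)"
    unfolding Rr_def
  proof (intro conjI allI impI)
    show "(mk g, mk h) \<in> GG \<beta>" using c by (simp add: closD_iff)
    fix X Y assume "(X, Y) \<in> GG \<beta>"
    hence "closD \<beta> (vec X) (vec Y)" by (simp add: GG_closD)
    hence "hs_inner (vec Y) h = hs_inner (vec X) w" using a by (simp add: adjD_def)
    also have "\<dots> = hs_inner (vec X) f - complex_of_real m2 * hs_inner (vec X) g"
      unfolding w by (simp add: hs_inner_diff_right hs_inner_scale_right assms hs HS_scale)
    finally show "cinner X (mk f) = cinner Y (mk h) + complex_of_real m2 * cinner X (mk g)"
      by (simp add: cinner_def assms hs)
  qed
  with hs show "HS g \<and> (\<exists>H. Rr \<beta> m2 (mk f) (mk g) H)" by blast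
next
  assume "HS g \<and> (\<exists>H. Rr \<beta> m2 (mk f) (mk g) H)"
  then obtain H where hg: "HS g" and R: "Rr \<beta> m2 (mk f) (mk g) H" by blast
  define w where "w = (\<lambda>p. f p - complex_of_real m2 * g p)"
  have hw: "HS w" unfolding w_def by (intro HS_diff HS_scale assms hg)
  have c: "closD \<beta> g (vec H)" using R hg by (simp add: Rr_def closD_iff vec_inverse)
  have a: "adjD \<beta> (vec H) w"
    unfolding adjD_def
  proof (intro conjI allI impI)
    show "HS (vec H)" "HS w" by (simp_all add: hw)
    fix x y assume "closD \<beta> x y"
    hence xy: "HS x" "HS y" "(mk x, mk y) \<in> GG \<beta>" by (simp_all add: closD_iff)
    hence "cinner (mk x) (mk f) = cinner (mk y) H + complex_of_real m2 * cinner (mk x) (mk g)"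
      using R by (simp add: Rr_def)
    hence "hs_inner x f = hs_inner y (vec H) + complex_of_real m2 * hs_inner x g"
      by (simp add: cinner_def xy assms hg)
    thus "hs_inner y (vec H) = hs_inner x w"
      unfolding w_def by (simp add: hs_inner_diff_right hs_inner_scale_right assms hg xy HS_scale)
  qed
  show "is_resolvent \<beta> m2 f g"
    unfolding is_resolvent_def DstarD_def using c a by (intro exI[of _ w]) (auto simp: w_def)
qed

lemma Rr_add: "Rr \<beta> m2 F1 G1 H1 \<Longrightarrow> Rr \<beta> m2 F2 G2 H2 \<Longrightarrow> Rr \<beta> m2 (F1 + F2) (G1 + G2) (H1 + H2)"
  unfolding Rr_def by (auto intro: GG_add simp: cinner_add_right algebra_simps)

lemma Rr_cs: "Rr \<beta> m2 F G H \<Longrightarrow> Rr \<beta> m2 (cs c F) (cs c G) (cs c H)"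
  unfolding Rr_def by (auto intro: GG_cs simp: cinner_cs_right algebra_simps)

lemma Rr_th: "Rr \<beta> m2 F G H \<Longrightarrow> Rr \<beta> m2 (th F) (th G) (- th H)"
  unfolding Rr_def
proof (intro conjI allI impI)
  assume R: "(G, H) \<in> GG \<beta> \<and> (\<forall>X Y. (X, Y) \<in> GG \<beta> \<longrightarrow> cinner X F = cinner Y H + complex_of_real m2 * cinner X G)"
  thus "(th G, - th H) \<in> GG \<beta>" by (simp add: GG_th)
  fix X Y assume "(X, Y) \<in> GG \<beta>"
  hence "(th X, - th Y) \<in> GG \<beta>" by (rule GG_th)
  hence "cinner (th X) F = cinner (- th Y) H + complex_of_real m2 * cinner (th X) G" using R by blast
  thus "cinner X (th F) = cinner Y (- th H) + complex_of_real m2 * cinner X (th G)"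
    by (simp add: cinner_th cinner_uminus_left cinner_uminus_right)
qed

lemma Rr_self: "Rr \<beta> m2 F G H \<Longrightarrow> cinner G F = complex_of_real ((norm H)\<^sup>2 + m2 * (norm G)\<^sup>2)"
  unfolding Rr_def by (auto simp: cinner_self)

lemma two_inner_le: "2 * inner a b \<le> (norm a)\<^sup>2 + (norm (b::'a::real_inner))\<^sup>2"
proof -
  have "0 \<le> (norm (a - b))\<^sup>2" by simp
  also have "(norm (a - b))\<^sup>2 = (norm a)\<^sup>2 - 2 * inner a b + (norm b)\<^sup>2"
    unfolding power2_norm_eq_inner by (simp add: inner_diff inner_commute)
  finally show ?thesis by linarith
qed

lemma Rr_var:
  assumes "Rr \<beta> m2 F G H" "(X, Y) \<in> GG \<beta>" "m2 \<ge> 0"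
  shows "2 * Re (cinner X F) - (norm Y)\<^sup>2 - m2 * (norm X)\<^sup>2 \<le> (norm H)\<^sup>2 + m2 * (norm G)\<^sup>2"
proof -
  have "cinner X F = cinner Y H + complex_of_real m2 * cinner X G" using assms by (simp add: Rr_def)
  hence "Re (cinner X F) = inner Y H + m2 * inner X G" by (simp add: Re_cinner)
  moreover have "2 * inner Y H \<le> (norm Y)\<^sup>2 + (norm H)\<^sup>2" by (rule two_inner_le)
  moreover have "m2 * (2 * inner X G) \<le> m2 * ((norm X)\<^sup>2 + (norm G)\<^sup>2)"
    using assms(3) two_inner_le by (rule mult_left_mono[rotated])
  ultimately show ?thesis by (simp add: algebra_simps)
qed

lemma zero_GG: "(0, 0) \<in> GG \<beta>"
proof -
  have "in_D (\<lambda>_. 0)" by (simp add: in_D_def)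
  hence "(mk (\<lambda>_. 0), mk (Dop \<beta> (\<lambda>_. 0))) \<in> GG \<beta>" unfolding GG_def
    using Dset_mem closure_subset by blast
  moreover have "Dop \<beta> (\<lambda>_. 0) = (\<lambda>_. 0)" by (auto simp: Dop_def)
  ultimately show ?thesis by (simp add: zero_ell2_def)
qed

lemma GG_scaleR: "(a, b) \<in> GG \<beta> \<Longrightarrow> (r *\<^sub>R a, r *\<^sub>R b) \<in> GG \<beta>"
  by (simp add: cs_scaleR GG_cs)

lemma cplx_eq: "Re a = Re b + m * Re c \<Longrightarrow> Im a = Im b + m * Im c \<Longrightarrow> a = b + complex_of_real m * c"
  by (simp add: complex_eq_iff)

lemma existence:
  assumes "m2 > 0"
  shows "\<exists>G H. Rr \<beta> m2 F G H"
proof -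
  define c where "c = sqrt m2"
  have c: "c > 0" "c * c = m2" using assms by (simp_all add: c_def)
  define S where "S = (\<lambda>z. ((1/c) *\<^sub>R fst z, snd z)) -` GG \<beta>"
  have S_iff: "(c *\<^sub>R a, b) \<in> S \<longleftrightarrow> (a, b) \<in> GG \<beta>" for a b
    using c by (simp add: S_def)
  have closed: "closed S" unfolding S_def GG_def
    by (rule closed_vimage) (auto intro!: continuous_intros)
  have "\<exists>x\<in>S. \<forall>y\<in>S. inner (((1/c) *\<^sub>R F, 0) - x) y = 0"
  proof (rule proj_exists[OF closed])
    show "0 \<in> S" using zero_GG by (simp add: S_def zero_prod_def)
    fix x y assume "x \<in> S" "y \<in> S"
    thus "x + y \<in> S" by (auto simp: S_def scaleR_add_right intro: GG_add[of _ _ \<beta>, simplified])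
  next
    fix r x assume "x \<in> S"
    thus "r *\<^sub>R x \<in> S" unfolding S_def using GG_scaleR[of "(1/c) *\<^sub>R fst x" "snd x" \<beta> r]
      by (simp add: scaleR_prod_def)
  qed
  then obtain x where xS: "x \<in> S" and orth: "\<And>y. y \<in> S \<Longrightarrow> inner (((1/c) *\<^sub>R F, 0) - x) y = 0"
    by blast
  define G where "G = (1/c) *\<^sub>R fst x"
  define H where "H = snd x"
  have x: "x = (c *\<^sub>R G, H)" using c by (simp add: G_def H_def)
  have GH: "(G, H) \<in> GG \<beta>" using xS S_iff x by simp
  have re: "inner X F = inner Y H + m2 * inner X G" if "(X, Y) \<in> GG \<beta>" for X Y
  proof -
    have "(c *\<^sub>R X, Y) \<in> S" using that S_iff by simp
    hence "inner (((1/c) *\<^sub>R F, 0) - x) (c *\<^sub>R X, Y) = 0" by (rule orth)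
    hence "inner F X - c * c * inner G X - inner H Y = 0"
      using c unfolding x by (simp add: inner_diff_left inner_commute algebra_simps)
    thus ?thesis using c by (simp add: inner_commute)
  qed
  have "Rr \<beta> m2 F G H"
    unfolding Rr_def
  proof (intro conjI allI impI GH)
    fix X Y assume XY: "(X, Y) \<in> GG \<beta>"
    have "(cs \<i> X, cs \<i> Y) \<in> GG \<beta>" using XY by (rule GG_cs)
    from re[OF this] re[OF XY]
    show "cinner X F = cinner Y H + complex_of_real m2 * cinner X G"
      by (intro cplx_eq) (simp_all add: Re_cinner Im_cinner inner_commute)
  qed
  thus ?thesis by blast
qed



lemma Theta_vec_odd: "th a = - a \<Longrightarrow> Theta (vec a) p = - vec a p"
  by (metis vec_th vec_uminus)

lemma sm_inner_Hplus:
  assumes odd: "th Go = - Go" and fp: "\<And>n k. n + 2 * k < 0 \<Longrightarrow> vec F (n, k) = 0"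
  shows "cinner (sm Go) F = cinner Go F"
proof -
  have pw: "cnj (sg p * vec Go p) * vec F p = cnj (vec Go p) * vec F p" for p
  proof -
    obtain n k where p: "p = (n, k)" by fastforce
    consider "n + 2 * k > 0" | "n + 2 * k < 0" | "n + 2 * k = 0" by linarith
    thus ?thesis
    proof cases
      case 1 thus ?thesis by (simp add: p sg_def)
    next
      case 2 thus ?thesis by (simp add: p fp)
    next
      case 3
      have "vec Go (n, k) = 0" by (rule odd_zero[OF Theta_vec_odd[OF odd] 3])
      thus ?thesis by (simp add: p)
    qed
  qed
  have "(\<lambda>p. cnj (sg p * vec Go p) * vec F p) = (\<lambda>p. cnj (vec Go p) * vec F p)"
    by (rule ext) (rule pw)
  thus ?thesis unfolding cinner_def hs_inner_def vec_sm by simp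
qed

lemma th_sm_odd:
  assumes odd: "th Go = - Go"
  shows "th (sm Go) = sm Go"
proof (rule ell2_eqI)
  fix p :: "int \<times> int"
  obtain n k where p: "p = (n, k)" by fastforce
  have "Theta (vec Go) (n, k) = - vec Go (n, k)" by (rule Theta_vec_odd[OF odd])
  hence g: "vec Go (n, - k - n) = - vec Go (n, k)" by (simp add: Theta_def)
  have s: "sg (n, - k - n) = - sg (n, k)" by (simp add: sg_def)
  show "vec (th (sm Go)) p = vec (sm Go) p"
    by (simp add: p Theta_def g s)
qed

theorem mainTheorem3:
  fixes \<beta> :: "int \<Rightarrow> complex" and m2 :: real and f :: hs
  assumes "convergent_increments \<beta>"
    and "m2 > 0"
    and "in_Hplus f"
  shows "(\<exists>!g. is_resolvent \<beta> m2 f g) \<and>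
         (\<forall>g. is_resolvent \<beta> m2 f g \<longrightarrow>
           Im (hs_inner (Theta f) g) = 0 \<and> Re (hs_inner (Theta f) g) \<ge> 0)"
proof -
  have hf: "HS f" and fp: "\<And>n k. n + 2 * k < 0 \<Longrightarrow> f (n, k) = 0"
    using assms(3) by (auto simp: in_Hplus_def)
  define F where "F = mk f"
  have vF: "vec F = f" by (simp add: F_def hf)
  have m2: "m2 \<ge> 0" using assms(2) by simp
  have ex: "\<exists>g. is_resolvent \<beta> m2 f g"
  proof -
    obtain G H where "Rr \<beta> m2 F G H" using existence[OF assms(2)] by blast
    hence "is_resolvent \<beta> m2 f (vec G)" using res_iff[OF hf] by (auto simp: F_def vec_inverse)
    thus ?thesis by blast
  qed
  have un: "g1 = g2" if "is_resolvent \<beta> m2 f g1" "is_resolvent \<beta> m2 f g2" for g1 g2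
  proof -
    have "HS g1 \<and> (\<exists>H. Rr \<beta> m2 F (mk g1) H)" using that(1) res_iff[OF hf] by (simp add: F_def)
    then obtain H1 where h1: "HS g1" and R1: "Rr \<beta> m2 F (mk g1) H1" by blast
    have "HS g2 \<and> (\<exists>H. Rr \<beta> m2 F (mk g2) H)" using that(2) res_iff[OF hf] by (simp add: F_def)
    then obtain H2 where h2: "HS g2" and R2: "Rr \<beta> m2 F (mk g2) H2" by blast
    note h = h1 h2
    have "Rr \<beta> m2 (F + cs (-1) F) (mk g1 + cs (-1) (mk g2)) (H1 + cs (-1) H2)"
      by (intro Rr_add R1 Rr_cs R2)
    moreover have "F + cs (-1) F = 0" by (rule ell2_eqI) simp
    ultimately have "cinner (mk g1 + cs (-1) (mk g2)) 0 =
        complex_of_real ((norm (H1 + cs (-1) H2))\<^sup>2 + m2 * (norm (mk g1 + cs (-1) (mk g2)))\<^sup>2)"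
      using Rr_self by metis
    hence "0 = complex_of_real ((norm (H1 + cs (-1) H2))\<^sup>2 + m2 * (norm (mk g1 + cs (-1) (mk g2)))\<^sup>2)"
      by (simp only: cinner_zero_right)
    hence "(norm (H1 + cs (-1) H2))\<^sup>2 + m2 * (norm (mk g1 + cs (-1) (mk g2)))\<^sup>2 = 0"
      by (metis of_real_eq_0_iff)
    hence "norm (mk g1 + cs (-1) (mk g2)) = 0" using assms(2)
      by (smt (verit) mult_pos_pos zero_le_power2 zero_less_norm_iff zero_less_power2)
    hence "mk g1 + cs (-1) (mk g2) = 0" by simp
    have "g1 p = g2 p" for p
      using arg_cong[OF \<open>mk g1 + cs (-1) (mk g2) = 0\<close>, of "\<lambda>a. vec a p"] h by simp
    thus "g1 = g2" using h by (auto simp: fun_eq_iff)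
  qed
  have pos: "Im (hs_inner (Theta f) g) = 0 \<and> Re (hs_inner (Theta f) g) \<ge> 0"
    if "is_resolvent \<beta> m2 f g" for g
  proof -
    have "HS g \<and> (\<exists>H. Rr \<beta> m2 F (mk g) H)" using that res_iff[OF hf] by (simp add: F_def)
    then obtain H where hg: "HS g" and R: "Rr \<beta> m2 F (mk g) H" by blast
    define G where "G = mk g"
    have R': "Rr \<beta> m2 (th F) (th G) (- th H)" using Rr_th R by (simp add: G_def)
    define Fe where "Fe = cs (1/2) (F + th F)"
    define Ge where "Ge = cs (1/2) (G + th G)"
    define He where "He = cs (1/2) (H + - th H)"
    define Fo where "Fo = cs (1/2) (F + cs (-1) (th F))"
    define Go where "Go = cs (1/2) (G + cs (-1) (th G))"
    define Ho where "Ho = cs (1/2) (H + cs (-1) (- th H))"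
    have Re: "Rr \<beta> m2 Fe Ge He" unfolding Fe_def Ge_def He_def
      using R R' by (intro Rr_cs Rr_add) (simp_all add: G_def)
    have Ro: "Rr \<beta> m2 Fo Go Ho" unfolding Fo_def Go_def Ho_def
      using R R' by (intro Rr_cs Rr_add) (simp_all add: G_def)
    have thFe: "th Fe = Fe" unfolding Fe_def th_cs th_add th_th th_uminus by (rule ell2_eqI) (simp add: algebra_simps)
    have thGe: "th Ge = Ge" unfolding Ge_def th_cs th_add th_th th_uminus by (rule ell2_eqI) (simp add: algebra_simps)
    have thFo: "th Fo = - Fo" unfolding Fo_def th_cs th_add th_th th_uminus by (rule ell2_eqI) (simp add: algebra_simps)
    have thGo: "th Go = - Go" unfolding Go_def th_cs th_add th_th th_uminus by (rule ell2_eqI) (simp add: algebra_simps)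
    define X where "X = sm Go"
    define Y where "Y = sm ((1/2) *\<^sub>R (Ho + th Ho))"
    have GoHo: "(Go, Ho) \<in> GG \<beta>" using Ro by (simp add: Rr_def)
    have XY: "(X, Y) \<in> GG \<beta>" unfolding X_def Y_def by (rule GG_odd[OF GoHo thGo])
    have var: "2 * Re (cinner X Fe) - (norm Y)\<^sup>2 - m2 * (norm X)\<^sup>2 \<le> (norm He)\<^sup>2 + m2 * (norm Ge)\<^sup>2"
      by (rule Rr_var[OF Re XY m2])
    have nX: "norm X \<le> norm Go" unfolding X_def by (rule norm_sm)
    have nY: "norm Y \<le> norm Ho"
    proof -
      have "norm Y \<le> norm ((1/2) *\<^sub>R (Ho + th Ho))" unfolding Y_def by (rule norm_sm)
      also have "\<dots> \<le> (1/2) * (norm Ho + norm (th Ho))" by (simp add: norm_triangle_ineq)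
      also have "\<dots> = norm Ho" by (simp add: norm_th)
      finally show ?thesis .
    qed
    have fpF: "\<And>n k. n + 2 * k < 0 \<Longrightarrow> vec F (n, k) = 0" using fp by (simp add: vF)
    have thX: "th X = X" unfolding X_def by (rule th_sm_odd[OF thGo])
    have key: "cinner X Fe = cinner Go Fo"
    proof -
      have "cinner X Fe = (1/2) * (cinner X F + cinner (th X) F)"
        unfolding Fe_def by (simp add: cinner_cs_right cinner_add_right cinner_th)
      also have "\<dots> = cinner Go F" using thX sm_inner_Hplus[OF thGo fpF] by (simp add: X_def)
      also have "\<dots> = (1/2) * (cinner Go F - cinner (th Go) F)"
        using thGo by (simp add: cinner_uminus_left)
      also have "\<dots> = cinner Go Fo"
        unfolding Fo_def by (simp add: cinner_cs_right cinner_add_right cinner_th)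
      finally show ?thesis .
    qed
    define Qe where "Qe = (norm He)\<^sup>2 + m2 * (norm Ge)\<^sup>2"
    define Qo where "Qo = (norm Ho)\<^sup>2 + m2 * (norm Go)\<^sup>2"
    have sE: "cinner Ge Fe = complex_of_real Qe" unfolding Qe_def by (rule Rr_self[OF Re])
    have sO: "cinner Go Fo = complex_of_real Qo" unfolding Qo_def by (rule Rr_self[OF Ro])
    have A: "(norm Y)\<^sup>2 \<le> (norm Ho)\<^sup>2" using nY by (intro power_mono) simp_all
    have B: "m2 * (norm X)\<^sup>2 \<le> m2 * (norm Go)\<^sup>2"
      using nX norm_ge_zero m2 by (intro mult_left_mono power_mono) auto
    have C: "Re (cinner X Fe) = Qo" using key sO by simp
    have QoQe: "Qo \<le> Qe" using var A B C unfolding Qe_def Qo_def by linarith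
    have c1: "cinner Fe Go = 0"
    proof -
      have "cinner Fe Go = cinner (th Fe) Go" by (simp add: thFe)
      also have "\<dots> = - cinner Fe Go" by (simp add: cinner_th thGo cinner_uminus_right)
      finally show ?thesis by simp
    qed
    have c2: "cinner Fo Ge = 0"
    proof -
      have "cinner Fo Ge = cinner Fo (th Ge)" by (simp add: thGe)
      also have "\<dots> = - cinner Fo Ge" by (simp add: cinner_th[symmetric] thFo cinner_uminus_left)
      finally show ?thesis by simp
    qed
    have tF: "th F = Fe - Fo" unfolding Fe_def Fo_def by (rule ell2_eqI) (simp add: algebra_simps)
    have tG: "G = Ge + Go" unfolding Ge_def Go_def by (rule ell2_eqI) (simp add: algebra_simps)
    have "hs_inner (Theta f) g = cinner (th F) G" by (simp add: cinner_def vF G_def hg)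
    also have "\<dots> = cinner Fe Ge + cinner Fe Go - cinner Fo Ge - cinner Fo Go"
      unfolding tF tG by (simp add: cinner_diff_left cinner_add_right)
    also have "\<dots> = cnj (cinner Ge Fe) - cnj (cinner Go Fo)"
      using c1 c2 by (simp add: cinner_cnj[of Fe] cinner_cnj[of Fo])
    also have "\<dots> = complex_of_real (Qe - Qo)" by (simp add: sE sO)
    finally show ?thesis using QoQe by simp
  qed
  show ?thesis using ex un pos by blast
qed


end
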